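(* Let $G$ be $\mathbb{T}$ or $\mathbb{O}$, and let $R_{ij},R_{ji},R_i,R_j\in SO(3)$ satisfy $$\{R_{ij}^T g R_{ji} : g\in G\}=\{R_i^T g R_j : g\in G\}.$$ Then $$\{\pm R_{ij}^Te_{kl}R_{ji}\}_{k,l=1}^3=\{\pm (v_i^{(k)})^Tv_j^{(l)}\}_{k,l=1}^3,$$ where $v_i^{(k)}$ is the $k$-th row of $R_i$ and $v_j^{(l)}$ is the $l$-th row of $R_j$.
   Context: In the fixed coordinate system, $\mathbb{O}$ is the group of all $3\times3$ signed permutation matrices (exactly one nonzero entry, equal to $\pm1$, in each row and column) of determinant $1$, and $\mathbb{T}\subset\mathbb{O}$ is the 12-element subgroup of matrices $DP$ with $P$ the permutation matrix of an even permutation of $\{1,2,3\}$ and $D$ diagonal with entries $\pm1$, $\det D=1$. For $k,l\in\{1,2,3\}$, $e_{kl}\in\mathbb{R}^{3\times3}$ is the single-entry matrix with $(k,l)$ entry $1$ and all other entries $0$. Rows are treated as $1\times3$ row vectors, so $(v_i^{(k)})^Tv_j^{(l)}$ is a $3\times3$ rank-one matrix. The notation $\{\pm M_{kl}\}_{k,l=1}^3$ denotes the set $\{M_{kl}\}_{k,l}\cup\{-M_{kl}\}_{k,l}$. *)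

theory Defs
  imports "HOL-Analysis.Analysis" "HOL-Library.Numeral_Type"
begin

type_synonym mat3 = "real^3^3"

definition SO3 :: "mat3 set" where
  "SO3 = {R. orthogonal_matrix R \<and> det R = 1}"

definition signed_perm_mat :: "mat3 \<Rightarrow> bool" where
  "signed_perm_mat M \<longleftrightarrow>
     (\<forall>i j. M $ i $ j \<in> {-1, 0, 1}) \<and>
     (\<forall>i. \<exists>!j. M $ i $ j \<noteq> 0) \<and>
     (\<forall>j. \<exists>!i. M $ i $ j \<noteq> 0)"

definition octa_group :: "mat3 set" where
  "octa_group = {M. signed_perm_mat M \<and> det M = 1}"

definition perm_mat :: "(3 \<Rightarrow> 3) \<Rightarrow> mat3" where
  "perm_mat p = (\<chi> i j. if p i = j then 1 else 0)"

definition sign_diag :: "mat3 \<Rightarrow> bool" where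
  "sign_diag D \<longleftrightarrow> (\<forall>i j. i \<noteq> j \<longrightarrow> D $ i $ j = 0) \<and> (\<forall>i. D $ i $ i \<in> {-1, 1}) \<and> det D = 1"

definition tetra_group :: "mat3 set" where
  "tetra_group = {D ** P | D P. sign_diag D \<and>
      (\<exists>p. p permutes (UNIV :: 3 set) \<and> evenperm p \<and> P = perm_mat p)}"

definition e_mat :: "3 \<Rightarrow> 3 \<Rightarrow> mat3" where
  "e_mat k l = (\<chi> a b. if a = k \<and> b = l then 1 else 0)"

definition outer :: "real^3 \<Rightarrow> real^3 \<Rightarrow> mat3" where
  "outer u v = (\<chi> a b. u $ a * v $ b)"

end

theory Submission
  imports Defs
begin

definition ent :: "mat3 \<Rightarrow> bool" where
  "ent M \<longleftrightarrow> (\<forall>i j. M $ i $ j \<in> {-1, 0, 1})"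

lemma orth_row_sum:
  assumes "orthogonal_matrix (P::mat3)"
  shows "P$i$1 * P$i$1 + P$i$2 * P$i$2 + P$i$3 * P$i$3 = 1"
proof -
  have "(P ** transpose P) $ i $ i = 1" using assms by (simp add: orthogonal_matrix_def mat_def)
  then show ?thesis by (simp add: matrix_matrix_mult_def transpose_def sum_3)
qed

lemma row_struct:
  assumes "orthogonal_matrix (P::mat3)" "ent P"
  shows "\<exists>j s. s \<in> {-1,1} \<and> (\<forall>j'. P$i$j' = (if j' = j then s else 0))"
proof -
  have r: "P$i$1 * P$i$1 + P$i$2 * P$i$2 + P$i$3 * P$i$3 = 1" by (rule orth_row_sum[OF assms(1)])
  have e: "P$i$1 \<in> {-1,0,1}" "P$i$2 \<in> {-1,0,1}" "P$i$3 \<in> {-1,0,1}" using assms(2) by (auto simp: ent_def)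
  have all: "\<forall>j'. P$i$j' = (if j' = j then s else 0)" if "P$i$j = s" "\<forall>j'. j' \<noteq> j \<longrightarrow> P$i$j' = 0" for j s
    using that by auto
  show ?thesis
    using e r
    apply (elim insertE emptyE)
    apply (simp_all)
    apply (metis (no_types, lifting) exhaust_3 insert_iff  all)+
    done
qed

lemma outer_e: "transpose (X::mat3) ** e_mat k l ** (Y::mat3) = outer (X $ k) (Y $ l)"
proof -
  have h: "(\<Sum>kb\<in>UNIV. X $ kb $ i * (if kb = k \<and> P then 1 else 0)) = (if P then X $ k $ i else (0::real))" for P i
  proof (cases P)
    case True
    have "(\<Sum>kb\<in>UNIV. X $ kb $ i * (if kb = k \<and> P then 1 else 0)) = (\<Sum>kb\<in>UNIV. if kb = k then X $ kb $ i else 0)"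
      by (rule sum.cong) (auto simp: True)
    then show ?thesis using True by simp
  qed simp
  have h2: "(\<Sum>ka\<in>UNIV. (if ka = l then c else 0) * Y $ ka $ ia) = c * Y $ l $ ia" for c ia
  proof -
    have "(\<Sum>ka\<in>UNIV. (if ka = l then c else 0) * Y $ ka $ ia) = (\<Sum>ka\<in>UNIV. if ka = l then c * Y $ ka $ ia else 0)"
      by (rule sum.cong) auto
    then show ?thesis by simp
  qed
  show ?thesis
    by (simp add: vec_eq_iff matrix_matrix_mult_def transpose_def e_mat_def outer_def h h2)
qed

lemma ent_mul:
  assumes "orthogonal_matrix (M::mat3)" "ent M" "ent N"
  shows "ent (M ** N)"
  unfolding ent_def
proof (intro allI)
  fix i j
  obtain m s where ms: "s \<in> {-1,1}" "\<forall>j'. M$i$j' = (if j' = m then s else 0)"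
    using row_struct[OF assms(1,2)] by blast
  have "(\<Sum>k\<in>UNIV. M$i$k * N$k$j) = (\<Sum>k\<in>UNIV. if k = m then s * N$k$j else 0)"
    by (rule sum.cong) (auto simp: ms(2))
  then have "(M ** N) $ i $ j = s * N $ m $ j"
    by (simp add: matrix_matrix_mult_def)
  then show "(M ** N) $ i $ j \<in> {-1,0,1}" using ms(1) assms(3) unfolding ent_def by (metis (no_types, lifting) insert_iff mult_minus_left mult_1 mult_zero_right minus_zero minus_minus empty_iff)
qed

lemma ent_transpose: "ent (transpose M) = ent M"
  by (auto simp: ent_def transpose_def)

lemma dp_entry:
  assumes "\<And>i j. i \<noteq> j \<Longrightarrow> D$i$j = 0"
  shows "(D ** perm_mat p) $ i $ j = D$i$i * (if p i = j then 1 else 0)"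
proof -
  have "(\<Sum>k\<in>UNIV. D$i$k * perm_mat p $ k $ j) = (\<Sum>k\<in>UNIV. if k = i then D$i$k * perm_mat p $ k $ j else 0)"
    by (rule sum.cong) (auto simp: assms)
  then show ?thesis by (simp add: matrix_matrix_mult_def perm_mat_def)
qed

lemma tetra_ent: assumes "g \<in> tetra_group" shows "ent g"
proof -
  obtain D p where g: "g = D ** perm_mat p" "sign_diag D" using assms unfolding tetra_group_def by blast
  have off: "\<And>i j. i \<noteq> j \<Longrightarrow> D$i$j = 0" using g(2) by (auto simp: sign_diag_def)
  show ?thesis unfolding ent_def g(1)
  proof (intro allI)
    fix i j
    have d: "D$i$i \<in> {-1,1}" using g(2) by (auto simp: sign_diag_def)
    show "(D ** perm_mat p) $ i $ j \<in> {-1,0,1}"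
      using dp_entry[OF off, of p i j] d by (cases "p i = j") auto
  qed
qed

lemma perm_mat_id: "perm_mat id = mat 1"
  by (simp add: perm_mat_def mat_def vec_eq_iff)

lemma sign_diag_I: "sign_diag (mat 1)"
proof -
  have "det (mat 1 :: mat3) = 1" by (rule det_I)
  then show ?thesis unfolding sign_diag_def by (simp add: mat_def)
qed

lemma tetra_I: "mat 1 \<in> tetra_group"
  unfolding tetra_group_def
  apply (rule CollectI)
  apply (rule exI[of _ "mat 1"], rule exI[of _ "mat 1"])
  apply (intro conjI)
    apply simp
   apply (rule sign_diag_I)
  apply (rule exI[of _ id])
  using perm_mat_id permutes_id[of UNIV] evenperm_id by (simp add: id_def)

lemma sign_diag_mul:
  assumes "sign_diag E" "sign_diag D"
  shows "sign_diag (E ** D)"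
proof -
  have e: "(E ** D) $ i $ j = (if i = j then E$i$i * D$i$i else 0)" for i j
  proof -
    have "(\<Sum>k\<in>UNIV. E$i$k * D$k$j) = (\<Sum>k\<in>UNIV. if k = i then E$i$k * D$k$j else 0)"
      by (rule sum.cong) (use assms in \<open>auto simp: sign_diag_def\<close>)
    then show ?thesis using assms by (auto simp: matrix_matrix_mult_def sign_diag_def)
  qed
  have "E$i$i * D$i$i \<in> {-1,1}" for i
  proof -
    have "E$i$i \<in> {-1,1}" "D$i$i \<in> {-1,1}" using assms by (auto simp: sign_diag_def)
    then show ?thesis by auto
  qed
  moreover have "det (E ** D) = 1" using assms by (simp add: det_mul sign_diag_def)
  ultimately show ?thesis unfolding sign_diag_def e by simp
qed

lemma tetra_left_diag:
  assumes "sign_diag E" "g \<in> tetra_group"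
  shows "E ** g \<in> tetra_group"
proof -
  from assms(2) obtain D P where "g = D ** P" "sign_diag D"
     "\<exists>p. p permutes (UNIV :: 3 set) \<and> evenperm p \<and> P = perm_mat p"
    unfolding tetra_group_def by blast
  then show ?thesis unfolding tetra_group_def
    using sign_diag_mul[OF assms(1)] by (auto simp: matrix_mul_assoc)
qed

lemma pm_left: "perm_mat q ** (M::mat3) = (\<chi> i j. M $ q i $ j)"
proof -
  have "(\<Sum>k\<in>UNIV. perm_mat q $ i $ k * M$k$j) = (\<Sum>k\<in>UNIV. if k = q i then M$k$j else 0)" for i j
    by (rule sum.cong) (auto simp: perm_mat_def)
  then show ?thesis by (simp add: matrix_matrix_mult_def vec_eq_iff)
qed

definition cq :: "3 \<Rightarrow> 3" where
  "cq = Transposition.transpose 1 2 \<circ> Transposition.transpose 2 3"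

lemma cq_vals: "cq 1 = 2" "cq 2 = 3" "cq 3 = 1"
  by (simp_all add: cq_def Transposition.transpose_def)

lemma cq_permutes: "cq permutes UNIV"
  unfolding cq_def by (intro permutes_compose permutes_swap_id) auto

lemma cq_even: "evenperm cq"
  unfolding cq_def
  by (subst evenperm_comp) (simp_all add: evenperm_swap permutation_swap_id)


lemma tetra_left_cyc:
  assumes "g \<in> tetra_group"
  shows "perm_mat cq ** g \<in> tetra_group"
proof -
  from assms obtain D p where g: "g = D ** perm_mat p" "sign_diag D"
     "p permutes (UNIV :: 3 set)" "evenperm p"
    unfolding tetra_group_def by blast
  define D' :: mat3 where "D' = (\<chi> i j. if i = j then D $ cq i $ cq i else 0)"
  have offd: "\<And>i j. i \<noteq> j \<Longrightarrow> D$i$j = 0" using g(2) by (simp add: sign_diag_def)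
  have offd': "\<And>i j. i \<noteq> j \<Longrightarrow> D'$i$j = 0" by (simp add: D'_def)
  have eq: "perm_mat cq ** g = D' ** perm_mat (p \<circ> cq)"
  proof -
    have "(perm_mat cq ** g) $ i $ j = (D' ** perm_mat (p \<circ> cq)) $ i $ j" for i j
    proof -
      have "(perm_mat cq ** g) $ i $ j = (D ** perm_mat p) $ cq i $ j"
        unfolding pm_left g(1) by simp
      also have "\<dots> = D $ cq i $ cq i * (if p (cq i) = j then 1 else 0)"
        by (rule dp_entry[OF offd])
      also have "\<dots> = (D' ** perm_mat (p \<circ> cq)) $ i $ j"
        using dp_entry[OF offd', of "p \<circ> cq" i j] by (simp add: D'_def)
      finally show ?thesis .
    qed
    then show ?thesis by (simp add: vec_eq_iff)
  qed
  have "det D' = prod (\<lambda>i. D' $ i $ i) UNIV"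
    by (rule det_diagonal[OF offd'])
  also have "\<dots> = prod (\<lambda>i. D $ cq i $ cq i) UNIV"
    by (simp add: D'_def)
  also have "\<dots> = prod (\<lambda>i. D $ i $ i) UNIV"
    by (rule prod.permute[OF cq_permutes, symmetric, unfolded comp_def])
  also have "\<dots> = det D" by (simp add: det_diagonal[OF offd])
  finally have "det D' = 1" using g(2) by (simp add: sign_diag_def)
  then have sd: "sign_diag D'" using g(2) by (simp add: sign_diag_def D'_def)
  have "p \<circ> cq permutes UNIV" by (rule permutes_compose[OF cq_permutes g(3)])
  moreover have "evenperm (p \<circ> cq)"
    using g(3,4) cq_even cq_permutes
    by (subst evenperm_comp) (auto simp: permutation_permutes)
  ultimately show ?thesis unfolding eq tetra_group_def using sd by blast
qed


lemma octa_ent: "g \<in> octa_group \<Longrightarrow> ent g"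
  by (simp add: octa_group_def signed_perm_mat_def ent_def)

lemma octa_I: "mat 1 \<in> octa_group"
proof -
  have "det (mat 1 :: mat3) = 1" by (rule det_I)
  moreover have "signed_perm_mat (mat 1)"
    unfolding signed_perm_mat_def by (simp add: mat_def)
  ultimately show ?thesis by (simp add: octa_group_def)
qed

definition rm :: "(3 \<Rightarrow> real) \<Rightarrow> (3 \<Rightarrow> 3) \<Rightarrow> mat3" where
  "rm s q = (\<chi> i j. s i * (if q i = j then 1 else 0))"

lemma rm_left: "rm s q ** (M::mat3) = (\<chi> i j. s i * M $ q i $ j)"
proof -
  have "(\<Sum>k\<in>UNIV. rm s q $ i $ k * M$k$j) = (\<Sum>k\<in>UNIV. if k = q i then s i * M$k$j else 0)" for i j
    by (rule sum.cong) (auto simp: rm_def)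
  then show ?thesis by (simp add: matrix_matrix_mult_def vec_eq_iff)
qed

lemma ex1_inv: "(\<And>x. q (q x) = x) \<Longrightarrow> (\<exists>!i. P (q i)) = (\<exists>!i. P i)"
  by metis

lemma spm_left:
  assumes "\<And>i. s i \<in> {-1,1}" "\<And>x. q (q x) = x" "signed_perm_mat M"
  shows "signed_perm_mat (\<chi> i j. s i * M $ q i $ j)"
proof -
  have nz: "s i \<noteq> 0" for i using assms(1)[of i] by auto
  have e: "s i * M $ q i $ j \<in> {-1,0,1}" for i j
  proof -
    have "M $ q i $ j \<in> {-1,0,1}" using assms(3) by (simp add: signed_perm_mat_def)
    then show ?thesis using assms(1)[of i] by auto
  qed
  have r: "\<exists>!j. s i * M $ q i $ j \<noteq> 0" for i
    using assms(3) nz by (simp add: signed_perm_mat_def)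
  have c: "\<exists>!i. s i * M $ q i $ j \<noteq> 0" for j
  proof -
    have "\<exists>!i. M $ i $ j \<noteq> 0" using assms(3) by (simp add: signed_perm_mat_def)
    then have "\<exists>!i. M $ q i $ j \<noteq> 0" using ex1_inv[of q "\<lambda>i. M $ i $ j \<noteq> 0", OF assms(2)] by simp
    then show ?thesis using nz by simp
  qed
  show ?thesis unfolding signed_perm_mat_def using e r c by simp
qed

lemma octa_left:
  assumes "\<And>i. s i \<in> {-1,1}" "\<And>x. q (q x) = x" "det (rm s q) = 1" "g \<in> octa_group"
  shows "rm s q ** g \<in> octa_group"
proof -
  have "signed_perm_mat (rm s q ** g)" unfolding rm_left
    by (rule spm_left[OF assms(1,2)]) (use assms(4) in \<open>simp add: octa_group_def\<close>)
  moreover have "det (rm s q ** g) = 1" using assms(3,4) by (simp add: det_mul octa_group_def)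
  ultimately show ?thesis by (simp add: octa_group_def)
qed

definition s1 :: "3 \<Rightarrow> real" where "s1 i = (if i = 2 then -1 else 1)"
definition s2 :: "3 \<Rightarrow> real" where "s2 i = (if i = 3 then -1 else 1)"
definition s3 :: "3 \<Rightarrow> real" where "s3 i = (if i = 1 then -1 else 1)"

lemma det_R:
  "det (rm s1 (Transposition.transpose 2 3)) = 1"
  "det (rm s2 (Transposition.transpose 1 3)) = 1"
  "det (rm s3 (Transposition.transpose 1 2)) = 1"
  by (simp_all add: det_3 rm_def s1_def s2_def s3_def Transposition.transpose_def)

lemma sq_ent: fixes x :: real assumes "x * x \<in> {-1,0,1}" shows "x \<in> {-1,0,1}"
proof -
  have "x*x \<ge> 0" by simp
  moreover have "x*x = -1 \<or> x*x = 0 \<or> x*x = 1" using assms by auto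
  ultimately have "x * x = 0 \<or> x * x = 1" by linarith
  then show ?thesis by (auto simp: square_eq_1_iff)
qed

lemma half_sq: fixes x :: real assumes "2*(x*x) - 1 \<in> {-1,0,1}" shows "x*x = 0 \<or> x*x = 1/2 \<or> x*x = 1"
  using assms by auto

lemma prod_quarter: fixes x z :: real assumes "x*x = 1/2" "z*z = 1/2" shows "z*x \<notin> {-1,0,1}"
proof
  assume "z*x \<in> {-1,0,1}"
  then have "(z*x)*(z*x) \<in> {0,1}" by auto
  moreover have "(z*x)*(z*x) = (z*z)*(x*x)" by (simp add: algebra_simps)
  then have "(z*x)*(z*x) = 1/4" using assms by simp
  ultimately show False by auto
qed

lemma tri: fixes x y z :: real
  assumes "x*x+y*y+z*z = 1" "x*x-y*y-z*z \<in> {-1,0,1}" "y*y-x*x-z*z \<in> {-1,0,1}" "z*z-x*x-y*y \<in> {-1,0,1}"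
    "x*y+y*z+z*x \<in> {-1,0,1}"
  shows "x \<in> {-1,0,1}"
proof -
  have hx: "x*x = 0 \<or> x*x = 1/2 \<or> x*x = 1" by (rule half_sq) (use assms(1,2) in \<open>smt (verit)\<close>)
  have hy: "y*y = 0 \<or> y*y = 1/2 \<or> y*y = 1" by (rule half_sq) (use assms(1,3) in \<open>smt (verit)\<close>)
  have hz: "z*z = 0 \<or> z*z = 1/2 \<or> z*z = 1" by (rule half_sq) (use assms(1,4) in \<open>smt (verit)\<close>)
  have "x*x \<noteq> 1/2"
  proof
    assume x: "x*x = 1/2"
    then have "y*y+z*z = 1/2" using assms(1) by simp
    then have "(y*y = 0 \<and> z*z = 1/2) \<or> (y*y = 1/2 \<and> z*z = 0)" using hy hz by auto
    then show False
    proof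
      assume a: "y*y = 0 \<and> z*z = 1/2"
      then have "y = 0" by simp
      then have "z*x \<in> {-1,0,1}" using assms(5) by simp
      then show False using prod_quarter[OF x] a by blast
    next
      assume a: "y*y = 1/2 \<and> z*z = 0"
      then have "z = 0" by simp
      then have "y*x \<in> {-1,0,1}" using assms(5) by (simp add: mult.commute)
      then show False using prod_quarter[OF x] a by blast
    qed
  qed
  then have "x*x \<in> {-1,0,1}" using hx by auto
  then show ?thesis by (rule sq_ent)
qed

lemma conj_diag: "(P ** X ** transpose P) $ a $ a = (\<Sum>c\<in>UNIV. \<Sum>b\<in>UNIV. P$a$b * X$b$c * P$a$c)"
  by (simp add: matrix_matrix_mult_def transpose_def sum_distrib_right)

lemma O_ent:
  assumes "orthogonal_matrix P"
    and H: "\<And>X. (\<forall>g\<in>octa_group. X ** g \<in> octa_group) \<Longrightarrow> P ** X ** transpose P \<in> octa_group"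
  shows "ent P"
proof -
  have R1: "P ** rm s1 (Transposition.transpose 2 3) ** transpose P \<in> octa_group"
    by (rule H, intro ballI octa_left det_R) (auto simp: s1_def)
  have R2: "P ** rm s2 (Transposition.transpose 1 3) ** transpose P \<in> octa_group"
    by (rule H, intro ballI octa_left det_R) (auto simp: s2_def)
  have R3: "P ** rm s3 (Transposition.transpose 1 2) ** transpose P \<in> octa_group"
    by (rule H, intro ballI octa_left det_R) (auto simp: s3_def)
  have "P$a$1 * P$a$1 \<in> {-1,0,1}" for a
    using octa_ent[OF R1, unfolded ent_def, rule_format, of a a]
    by (simp add: conj_diag sum_3 rm_def s1_def Transposition.transpose_def)
  moreover have "P$a$2 * P$a$2 \<in> {-1,0,1}" for a
    using octa_ent[OF R2, unfolded ent_def, rule_format, of a a]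
    by (simp add: conj_diag sum_3 rm_def s2_def Transposition.transpose_def)
  moreover have "P$a$3 * P$a$3 \<in> {-1,0,1}" for a
    using octa_ent[OF R3, unfolded ent_def, rule_format, of a a]
    by (simp add: conj_diag sum_3 rm_def s3_def Transposition.transpose_def)
  ultimately have "P$a$k * P$a$k \<in> {-1,0,1}" for a k
    using exhaust_3[of k] by auto
  then show ?thesis unfolding ent_def using sq_ent by blast
qed


lemma T_ent:
  assumes "orthogonal_matrix P"
    and H: "\<And>X. (\<forall>g\<in>tetra_group. X ** g \<in> tetra_group) \<Longrightarrow> P ** X ** transpose P \<in> tetra_group"
  shows "ent P"
proof -
  define t1 :: "3 \<Rightarrow> real" where "t1 i = (if i = 1 then 1 else -1)" for i
  define t2 :: "3 \<Rightarrow> real" where "t2 i = (if i = 2 then 1 else -1)" for i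
  define t3 :: "3 \<Rightarrow> real" where "t3 i = (if i = 3 then 1 else -1)" for i
  have sd: "sign_diag (rm t1 id)" "sign_diag (rm t2 id)" "sign_diag (rm t3 id)"
    by (auto simp: sign_diag_def rm_def t1_def t2_def t3_def det_3)
  have D1: "P ** rm t1 id ** transpose P \<in> tetra_group"
    by (rule H, intro ballI tetra_left_diag sd)
  have D2: "P ** rm t2 id ** transpose P \<in> tetra_group"
    by (rule H, intro ballI tetra_left_diag sd)
  have D3: "P ** rm t3 id ** transpose P \<in> tetra_group"
    by (rule H, intro ballI tetra_left_diag sd)
  have CC: "P ** perm_mat cq ** transpose P \<in> tetra_group"
    by (rule H, intro ballI tetra_left_cyc)
  show ?thesis unfolding ent_def
  proof (intro allI)
    fix a k
    let ?x = "P$a$1" and ?y = "P$a$2" and ?z = "P$a$3"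
    have r: "?x*?x+?y*?y+?z*?z = 1" by (rule orth_row_sum[OF assms(1)])
    have e1: "?x*?x-?y*?y-?z*?z \<in> {-1,0,1}"
      using tetra_ent[OF D1, unfolded ent_def, rule_format, of a a]
      by (simp add: conj_diag sum_3 rm_def t1_def)
    have e2: "?y*?y-?x*?x-?z*?z \<in> {-1,0,1}"
      using tetra_ent[OF D2, unfolded ent_def, rule_format, of a a]
      by (simp add: conj_diag sum_3 rm_def t2_def)
    have e3: "?z*?z-?x*?x-?y*?y \<in> {-1,0,1}"
      using tetra_ent[OF D3, unfolded ent_def, rule_format, of a a]
      by (simp add: conj_diag sum_3 rm_def t3_def) (smt (verit))
    have e4: "?x*?y+?y*?z+?z*?x \<in> {-1,0,1}"
      using tetra_ent[OF CC, unfolded ent_def, rule_format, of a a]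
      by (simp add: conj_diag sum_3 perm_mat_def cq_vals) (smt (verit))
    have "?x \<in> {-1,0,1}" by (rule tri[OF r e1 e2 e3 e4])
    moreover have "?y \<in> {-1,0,1}"
      by (rule tri[of ?y ?z ?x]; insert r e1 e2 e3 e4; simp only: insert_iff empty_iff; smt (verit))
    moreover have "?z \<in> {-1,0,1}"
      by (rule tri[of ?z ?x ?y]; insert r e1 e2 e3 e4; simp only: insert_iff empty_iff; smt (verit))
    ultimately show "P$a$k \<in> {-1,0,1}" using exhaust_3[of k] by auto
  qed
qed


lemma mul_scaleR_right: "(X::mat3) ** (c *\<^sub>R M) = c *\<^sub>R (X ** M)"
  by (simp add: vec_eq_iff matrix_matrix_mult_def sum_distrib_left algebra_simps)

lemma mul_scaleR_left: "(c *\<^sub>R M) ** (Y::mat3) = c *\<^sub>R (M ** Y)"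
  by (simp add: vec_eq_iff matrix_matrix_mult_def sum_distrib_left algebra_simps)

lemma key:
  assumes G: "G = tetra_group \<or> G = octa_group"
    and oA: "orthogonal_matrix (A::mat3)" and oB: "orthogonal_matrix (B::mat3)"
    and oC: "orthogonal_matrix (C::mat3)" and oD: "orthogonal_matrix (D::mat3)"
    and H: "(\<lambda>g. transpose A ** g ** B) ` G = (\<lambda>g. transpose C ** g ** D) ` G"
  shows "\<exists>\<sigma> a b. \<sigma> \<in> {1,-1} \<and> transpose C ** e_mat k l ** D = \<sigma> *\<^sub>R (transpose A ** e_mat a b ** B)"
proof -
  define P where "P = C ** transpose A"
  define Q where "Q = B ** transpose D"
  have oP: "orthogonal_matrix P" unfolding P_def using oA oC by (simp add: orthogonal_matrix_mul)
  have oQ: "orthogonal_matrix Q" unfolding Q_def using oB oD by (simp add: orthogonal_matrix_mul)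
  have cl: "P ** g ** Q \<in> G" if "g \<in> G" for g
  proof -
    have "transpose A ** g ** B \<in> (\<lambda>g. transpose C ** g ** D) ` G" using H that by blast
    then obtain h where h: "h \<in> G" "transpose A ** g ** B = transpose C ** h ** D" by blast
    have "P ** g ** Q = C ** (transpose A ** g ** B) ** transpose D"
      by (simp add: P_def Q_def matrix_mul_assoc)
    also have "\<dots> = (C ** transpose C) ** h ** (D ** transpose D)"
      using h(2) by (simp add: matrix_mul_assoc)
    also have "\<dots> = h" using oC oD by (simp add: orthogonal_matrix_def)
    finally show ?thesis using h(1) by simp
  qed
  have I: "mat 1 \<in> G" using G tetra_I octa_I by auto
  have "transpose C ** mat 1 ** D \<in> (\<lambda>g. transpose A ** g ** B) ` G" using H I by blast
  then obtain g0 where g0: "g0 \<in> G" "transpose C ** mat 1 ** D = transpose A ** g0 ** B" by blast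
  have g0eq: "g0 = transpose P ** transpose Q"
  proof -
    have "transpose P ** transpose Q = A ** (transpose C ** mat 1 ** D) ** transpose B"
      by (simp add: P_def Q_def matrix_transpose_mul matrix_mul_assoc)
    also have "\<dots> = (A ** transpose A) ** g0 ** (B ** transpose B)"
      using g0(2) by (simp add: matrix_mul_assoc)
    also have "\<dots> = g0" using oA oB by (simp add: orthogonal_matrix_def)
    finally show ?thesis by simp
  qed
  have g0Q: "g0 ** Q = transpose P"
    using oQ by (simp add: g0eq matrix_mul_assoc[symmetric] orthogonal_matrix_def)
  have Pg0: "P ** g0 = transpose Q"
    using oP by (simp add: g0eq matrix_mul_assoc orthogonal_matrix_def)
  have conj: "P ** X ** transpose P \<in> G" if "\<forall>g\<in>G. X ** g \<in> G" for X
  proof -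
    have "P ** (X ** g0) ** Q \<in> G" using cl that g0(1) by blast
    moreover have "P ** (X ** g0) ** Q = P ** X ** (g0 ** Q)" by (simp add: matrix_mul_assoc)
    ultimately show ?thesis by (simp add: g0Q)
  qed
  have entP: "ent P"
    using G
  proof
    assume "G = tetra_group" then show ?thesis using T_ent[OF oP] conj by blast
  next
    assume "G = octa_group" then show ?thesis using O_ent[OF oP] conj by blast
  qed
  have entg0: "ent g0" using G g0(1) tetra_ent octa_ent by blast
  have entQ: "ent (P ** g0)"
    by (rule ent_mul[OF oP entP entg0])
  have oQt: "orthogonal_matrix (P ** g0)" unfolding Pg0 using oQ by simp
  obtain a s where as: "s \<in> {-1,1}" "\<forall>j'. P$k$j' = (if j' = a then s else 0)"
    using row_struct[OF oP entP] by blast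
  obtain b t where bt: "t \<in> {-1,1}" "\<forall>j'. (P ** g0)$l$j' = (if j' = b then t else 0)"
    using row_struct[OF oQt entQ] by blast
  have inner: "transpose P ** e_mat k l ** transpose Q = (s*t) *\<^sub>R e_mat a b"
    unfolding Pg0[symmetric] outer_e
    using as(2) bt(2) by (simp add: outer_def e_mat_def vec_eq_iff)
  have "transpose C ** e_mat k l ** D = transpose A ** (transpose P ** e_mat k l ** transpose Q) ** B"
  proof -
    have 1: "transpose A ** transpose P = transpose C"
      using oA by (simp add: P_def matrix_transpose_mul matrix_mul_assoc orthogonal_matrix_def)
    have 2: "transpose Q ** B = D"
      using oB by (simp add: Q_def matrix_transpose_mul matrix_mul_assoc[symmetric] orthogonal_matrix_def)
    have "transpose A ** (transpose P ** e_mat k l ** transpose Q) ** B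
        = (transpose A ** transpose P) ** e_mat k l ** (transpose Q ** B)"
      by (simp add: matrix_mul_assoc)
    then show ?thesis by (simp add: 1 2)
  qed
  also have "\<dots> = (s*t) *\<^sub>R (transpose A ** e_mat a b ** B)"
    unfolding inner by (simp add: mul_scaleR_left mul_scaleR_right)
  finally have "transpose C ** e_mat k l ** D = (s*t) *\<^sub>R (transpose A ** e_mat a b ** B)" .
  moreover have "s*t \<in> {1,-1}" using as(1) bt(1) by auto
  ultimately show ?thesis by blast
qed

theorem proposition4:
  fixes G :: "mat3 set" and Rij Rji Ri Rj :: mat3
  assumes "G = tetra_group \<or> G = octa_group"
    and "Rij \<in> SO3" "Rji \<in> SO3" "Ri \<in> SO3" "Rj \<in> SO3"
    and "(\<lambda>g. transpose Rij ** g ** Rji) ` G = (\<lambda>g. transpose Ri ** g ** Rj) ` G"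
  shows "{s *\<^sub>R (transpose Rij ** e_mat k l ** Rji) | s k l. s \<in> {1, -1}}
       = {s *\<^sub>R outer (Ri $ k) (Rj $ l) | s k l. s \<in> {1, -1}}"
proof -
  have o: "orthogonal_matrix Rij" "orthogonal_matrix Rji" "orthogonal_matrix Ri" "orthogonal_matrix Rj"
    using assms(2-5) by (auto simp: SO3_def)
  note k1 = key[OF assms(1) o(3,4,1,2) assms(6)[symmetric]]
  note k2 = key[OF assms(1) o(1,2,3,4) assms(6)]
  show ?thesis
  proof (rule set_eqI, rule iffI)
    fix x assume "x \<in> {s *\<^sub>R (transpose Rij ** e_mat k l ** Rji) | s k l. s \<in> {1, -1}}"
    then obtain s k l where x: "x = s *\<^sub>R (transpose Rij ** e_mat k l ** Rji)" "s \<in> {1,-1}" by blast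
    obtain \<sigma> a b where ab: "\<sigma> \<in> {1,-1}" "transpose Rij ** e_mat k l ** Rji = \<sigma> *\<^sub>R (transpose Ri ** e_mat a b ** Rj)"
      using k1[of k l] by blast
    have "x = (s*\<sigma>) *\<^sub>R outer (Ri $ a) (Rj $ b)" using x(1) ab(2) by (simp add: outer_e)
    moreover have "s*\<sigma> \<in> {1,-1}" using x(2) ab(1) by auto
    ultimately show "x \<in> {s *\<^sub>R outer (Ri $ k) (Rj $ l) | s k l. s \<in> {1, -1}}" by blast
  next
    fix x assume "x \<in> {s *\<^sub>R outer (Ri $ k) (Rj $ l) | s k l. s \<in> {1, -1}}"
    then obtain s k l where x: "x = s *\<^sub>R (transpose Ri ** e_mat k l ** Rj)" "s \<in> {1,-1}"
      by (auto simp: outer_e)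
    obtain \<sigma> a b where ab: "\<sigma> \<in> {1,-1}" "transpose Ri ** e_mat k l ** Rj = \<sigma> *\<^sub>R (transpose Rij ** e_mat a b ** Rji)"
      using k2[of k l] by blast
    have "x = (s*\<sigma>) *\<^sub>R (transpose Rij ** e_mat a b ** Rji)" using x(1) ab(2) by simp
    moreover have "s*\<sigma> \<in> {1,-1}" using x(2) ab(1) by auto
    ultimately show "x \<in> {s *\<^sub>R (transpose Rij ** e_mat k l ** Rji) | s k l. s \<in> {1, -1}}" by blast
  qed
qed

end
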